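(* Let $n \geq 2$, $b \geq 2$ and $B$ be positive integers, let $L := \lceil \log_2 n \rceil$ and $T := bB$, and assume $$B \geq \frac{n}{b} L \qquad\text{and}\qquad B \geq 4L .$$ Define $s_0 := n$ and $s_{r+1} := \lceil s_r/2 \rceil$ for $r \geq 0$, and for each $r \geq 0$ let $J_r := \left\lfloor \frac{T}{s_r L} \right\rfloor$. Then for every integer $r$ with $0 \leq r < L - 1$ and every integer $z$ with $0 \leq z < b$, $$s_{r+1} - \left\lceil \frac{b - z}{J_{r+1}} \right\rceil \;\geq\; \left\lceil \frac{z}{J_r} \right\rceil .$$
   Context: $\lceil\cdot\rceil$ and $\lfloor\cdot\rfloor$ denote the ceiling and floor functions. In the paper, $s_r$ is the number of surviving candidate arms in round $r$ of Sequential Halving with $n$ arms and total budget $T$, and $J_r$ is the number of pulls of each surviving arm in round $r$; the inequality expresses that when a batch of size $b$ spans rounds $r$ and $r+1$ (with $z$ pulls in round $r$), no incorrect promotion occurs. The hypotheses guarantee $J_r \ge 1$ for all relevant $r$. *)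

theory Defs
  imports Complex_Main
begin

text \<open>Sequential Halving: number of surviving arms, s_0 = n, s_(r+1) = ceil(s_r / 2).\<close>
fun sh_s :: "nat \<Rightarrow> nat \<Rightarrow> nat" where
  "sh_s n 0 = n"
| "sh_s n (Suc r) = nat \<lceil>real (sh_s n r) / 2\<rceil>"

definition sh_L :: "nat \<Rightarrow> nat" where
  "sh_L n = nat \<lceil>log 2 (real n)\<rceil>"

definition sh_J :: "nat \<Rightarrow> nat \<Rightarrow> nat \<Rightarrow> int" where
  "sh_J n T r = \<lfloor>real T / (real (sh_s n r) * real (sh_L n))\<rfloor>"

end

theory Submission
  imports Defs
begin

lemma ceil_bound:
  fixes a k :: int
  assumes "k \<ge> 1"
  shows "(\<lceil>real_of_int a / real_of_int k\<rceil> - 1) * k \<le> a - 1"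
proof -
  let ?p = "\<lceil>real_of_int a / real_of_int k\<rceil>"
  have "real_of_int ?p < real_of_int a / real_of_int k + 1" by linarith
  hence "real_of_int (?p - 1) < real_of_int a / real_of_int k" by simp
  hence "real_of_int (?p - 1) * real_of_int k < real_of_int a"
    using assms by (simp add: pos_less_divide_eq)
  hence "(?p - 1) * k < a" by (metis of_int_less_iff of_int_mult)
  thus ?thesis by simp
qed

lemma key:
  fixes a c k J s :: int
  assumes k: "k \<ge> 1" and J: "J \<ge> 2 * k" and s: "s \<ge> 2"
    and sk: "s * (k + 1) > 2 * (a + c)" and a: "a \<ge> 0" and c: "c \<ge> 1"
  shows "\<lceil>real_of_int a / real_of_int k\<rceil> + \<lceil>real_of_int c / real_of_int J\<rceil> \<le> s"
proof -
  define p where "p = \<lceil>real_of_int a / real_of_int k\<rceil>"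
  define q where "q = \<lceil>real_of_int c / real_of_int (2*k)\<rceil>"
  have "real_of_int c / real_of_int J \<le> real_of_int c / real_of_int (2*k)"
    using k J c by (intro divide_left_mono) auto
  hence qq: "\<lceil>real_of_int c / real_of_int J\<rceil> \<le> q" unfolding q_def by (rule ceiling_mono)
  have p1: "(p - 1) * k \<le> a - 1" unfolding p_def using ceil_bound k by blast
  have q1: "(q - 1) * (2*k) \<le> c - 1" unfolding q_def using ceil_bound[of "2*k" c] k by simp
  have "p + q \<le> s"
  proof (rule ccontr)
    assume "\<not> p + q \<le> s"
    hence "p + q - 2 \<ge> s - 1" by simp
    hence "2*k*(p+q-2) \<ge> 2*k*(s-1)" using k by (intro mult_left_mono) auto
    moreover have "(k-1)*(s-2) \<ge> 0" using k s by simp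
    ultimately show False using p1 q1 sk a c by (simp add: algebra_simps)
  qed
  thus ?thesis using qq p_def by linarith
qed

lemma s_lower: "real (sh_s n m) \<ge> real n / 2 ^ m"
proof (induction m)
  case 0 then show ?case by simp
next
  case (Suc m)
  have "real (sh_s n (Suc m)) \<ge> real (sh_s n m) / 2"
    by simp
  have "real n / 2^Suc m = (real n / 2^m)/2" by simp
  also have "... \<le> real (sh_s n m)/2" using Suc by (simp add: divide_right_mono)
  also have "... \<le> real (sh_s n (Suc m))" by fact
  finally show ?case .
qed

lemma s_half: "real (sh_s n r) \<le> 2 * real (sh_s n (Suc r))"
  by simp linarith

lemma s_le: "sh_s n r \<le> n"
proof (induction r)
  case 0 then show ?case by simp
next
  case (Suc r)
  have "\<lceil>real (sh_s n r)/2\<rceil> \<le> \<lceil>real (sh_s n r)\<rceil>" by (intro ceiling_mono) simp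
  hence "sh_s n (Suc r) \<le> sh_s n r" by simp
  with Suc show ?case by linarith
qed

lemma div_le_self_real: "0 \<le> (x::real) \<Longrightarrow> 1 \<le> k \<Longrightarrow> x / k \<le> x"
  using divide_left_mono[of 1 k x] by simp

theorem mainTheorem2:
  fixes n b B :: nat
  assumes "n \<ge> 2" and "b \<ge> 2" and "B \<ge> 1"
    and "real B \<ge> real n / real b * real (sh_L n)"
    and "real B \<ge> 4 * real (sh_L n)"
  shows "\<forall>r z. r + 1 < sh_L n \<and> z < b \<longrightarrow>
           int (sh_s n (r + 1)) - \<lceil>(real b - real z) / real_of_int (sh_J n (b * B) (r + 1))\<rceil>
             \<ge> \<lceil>real z / real_of_int (sh_J n (b * B) r)\<rceil>"
proof (intro allI impI)
  fix r z assume rz: "r + 1 < sh_L n \<and> z < b"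
  define L where "L = sh_L n"
  define s where "s = sh_s n (Suc r)"
  define sr where "sr = sh_s n r"
  define T where "T = b * B"
  define k where "k = sh_J n T r"
  define J where "J = sh_J n T (Suc r)"
  have L1: "L \<ge> 1" using rz L_def by simp
  have s2: "s \<ge> 2"
  proof (rule ccontr)
    assume "\<not> s \<ge> 2"
    hence "real s \<le> 1" by simp
    moreover have "real n / 2 ^ (Suc r) \<le> real s" unfolding s_def by (rule s_lower)
    ultimately have "real n / 2 ^ (r+1) \<le> 1" by (simp only: Suc_eq_plus1)
    hence "real n \<le> 2 ^ (r+1)" by (simp add: field_simps)
    hence "log 2 (real n) \<le> log 2 (2 ^ (r+1))" using assms(1) by (subst log_le_cancel_iff) auto
    moreover have "log 2 ((2::real) ^ (r+1)) = real (r+1)" by (rule log_pow_cancel) auto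
    ultimately have "log 2 (real n) \<le> real (r+1)" by linarith
    hence "\<lceil>log 2 (real n)\<rceil> \<le> int (r+1)" by (intro ceiling_le) simp
    hence "nat \<lceil>log 2 (real n)\<rceil> \<le> nat (int (r+1))" by (rule nat_mono)
    hence "L \<le> r + 1" unfolding L_def sh_L_def by (simp only: nat_int)
    thus False using rz L_def by simp
  qed
  have srpos: "real sr > 0"
  proof -
    have "real n / 2 ^ r > 0" using assms(1) by simp
    thus ?thesis using s_lower[of n r] sr_def by linarith
  qed
  have srn: "real sr \<le> real n" using s_le[of n r] sr_def by simp
  have srs: "real sr \<le> 2 * real s" using s_half[of n r] sr_def s_def by simp
  have TnL: "real T \<ge> real n * real L"
  proof -
    have "real n / real b * real L \<le> real B" using assms(4) L_def by simp
    hence "real n * real L \<le> real B * real b" using assms(2) by (simp add: field_simps)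
    thus ?thesis unfolding T_def by (simp add: algebra_simps)
  qed
  have T4: "real T \<ge> 4 * real b * real L"
  proof -
    have "real b * (4 * real L) \<le> real b * real B" using assms(5) L_def by (intro mult_left_mono) auto
    thus ?thesis unfolding T_def by (simp add: algebra_simps)
  qed
  have Lpos: "real L > 0" using L1 by simp
  define y where "y = real T / real L"
  have y4: "y \<ge> 4 * real b" unfolding y_def using T4 Lpos by (simp add: field_simps)
  have yn: "y \<ge> real n" unfolding y_def using TnL Lpos by (simp add: field_simps)
  have k_def': "k = \<lfloor>y / real sr\<rfloor>" unfolding k_def y_def sh_J_def sr_def L_def
    by (simp add: field_simps)
  have J_def': "J = \<lfloor>y / real s\<rfloor>" unfolding J_def y_def sh_J_def s_def L_def
    by (simp add: field_simps)
  have sn: "real s \<le> real n" using s_le[of n "Suc r"] unfolding s_def by (simp del: sh_s.simps)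
  have ypos: "y > 0" using yn assms(1) by simp
  have k1: "k \<ge> 1"
  proof -
    have "y / real sr \<ge> 1" using srn yn srpos by (simp add: field_simps)
    thus ?thesis unfolding k_def' by simp
  qed
  have J1: "J \<ge> 1"
  proof -
    have "y / real s \<ge> 1" using sn yn s2 by (simp add: field_simps)
    thus ?thesis unfolding J_def' by simp
  qed
  define m where "m = \<lfloor>y / (2 * real s)\<rfloor>"
  have km: "k \<ge> m"
  proof -
    have "y / (2 * real s) \<le> y / real sr" using srs srpos ypos
      by (intro divide_left_mono) auto
    thus ?thesis unfolding k_def' m_def by (rule floor_mono)
  qed
  have Jm: "J \<ge> 2 * m"
  proof -
    have "real_of_int m \<le> y / (2 * real s)" unfolding m_def by (rule of_int_floor_le)
    hence "real_of_int (2 * m) \<le> 2 * (y / (2 * real s))" by simp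
    also have "... = y / real s" using s2 by simp
    finally show ?thesis unfolding J_def' by (simp add: le_floor_iff)
  qed
  have eq: "real b - real z = real_of_int (int b - int z)" by simp
  have main: "\<lceil>real_of_int (int z) / real_of_int k\<rceil> + \<lceil>real_of_int (int b - int z) / real_of_int J\<rceil> \<le> int s"
  proof (cases "m \<ge> 1")
    case True
    have "real s * (real_of_int m + 1) > real s * (y / (2 * real s))"
      using s2 unfolding m_def by (intro mult_strict_left_mono) (linarith, simp)
    also have "real s * (y / (2 * real s)) = y / 2" using s2 by simp
    finally have "real s * (real_of_int m + 1) > 2 * real b" using y4 by linarith
    hence "real_of_int (2 * int b) < real_of_int (int s * (m + 1))" by simp
    hence "2 * int b < int s * (m + 1)" by (simp only: of_int_less_iff)
    hence sk: "int s * (m + 1) > 2 * (int z + (int b - int z))" by simp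
    have "\<lceil>real_of_int (int z) / real_of_int k\<rceil> \<le> \<lceil>real_of_int (int z) / real_of_int m\<rceil>"
      using km True by (intro ceiling_mono divide_left_mono) auto
    moreover have "\<lceil>real_of_int (int z) / real_of_int m\<rceil> + \<lceil>real_of_int (int b - int z) / real_of_int J\<rceil> \<le> int s"
      using key[OF True Jm _ sk] s2 rz by simp
    ultimately show ?thesis by linarith
  next
    case False
    hence "y / (2 * real s) < 1" unfolding m_def by linarith
    hence "y < 2 * real s" using s2 by (simp add: field_simps)
    hence bs: "real b \<le> real s" using y4 by linarith
    have "\<lceil>real_of_int (int z) / real_of_int k\<rceil> \<le> \<lceil>real_of_int (int z)\<rceil>"
      using k1 by (intro ceiling_mono div_le_self_real) auto
    moreover have "\<lceil>real_of_int (int b - int z) / real_of_int J\<rceil> \<le> \<lceil>real_of_int (int b - int z)\<rceil>"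
      using J1 rz by (intro ceiling_mono div_le_self_real) auto
    moreover have "\<lceil>real_of_int (int b - int z)\<rceil> = int b - int z" by (rule ceiling_of_int)
    moreover have "\<lceil>real_of_int (int z)\<rceil> = int z" by (rule ceiling_of_int)
    ultimately show ?thesis using bs rz by linarith
  qed
  show "int (sh_s n (r + 1)) - \<lceil>(real b - real z) / real_of_int (sh_J n (b * B) (r + 1))\<rceil>
             \<ge> \<lceil>real z / real_of_int (sh_J n (b * B) r)\<rceil>"
    using main unfolding eq s_def J_def k_def T_def by simp
qed

end
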